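(* Consider $y=X\beta^\dagger+\eta$ with $X\in\mathbb{R}^{n\times p}$ having columns satisfying $\|X_j\|_2^2=n$, and assume (A1) $T\nu\le\frac14$; (A2) $|\beta^\dagger|_{\min}\ge78\lambda_u$; (A3) $\eta\sim N(0,\sigma^2I_n)$. Let $\gamma=8/13$, $\lambda_0=\|X^\top y/n\|_\infty$, $\lambda_t=\lambda_0\gamma^t$. Then, with probability at least $1-\frac{1}{2\sqrt{\pi\log p}}$, there exists an integer $N\in[1,\log_\gamma(10\delta_u/\lambda_0))$ such that $\lambda_N>10\delta_u\ge\lambda_{N+1}$ and $|\beta^\dagger|_{\min}>\frac85\lambda_N$.
   Context: $A^\dagger=\operatorname{supp}(\beta^\dagger)$, $T=|A^\dagger|$, $|\beta^\dagger|_{\min}=\min_{j\in A^\dagger}|\beta^\dagger_j|$; $\nu=\max_{i\ne j}|(X^\top X)_{ij}|/n$ is the mutual coherence; $\lambda_u=\sigma\sqrt{2\log(p)/n}$ and $\delta_u=3\lambda_u$. *)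

theory Defs
  imports "HOL-Probability.Probability"
begin

text \<open>Design matrix X (n x p) as a function with indices i < n (rows), j < p (columns);
vectors in R^p / R^n as functions nat => real with index guards.\<close>

definition supp :: "(nat \<Rightarrow> real) \<Rightarrow> nat \<Rightarrow> nat set" where
  "supp \<beta> p = {j. j < p \<and> \<beta> j \<noteq> 0}"

definition beta_min :: "(nat \<Rightarrow> real) \<Rightarrow> nat \<Rightarrow> real" where
  "beta_min \<beta> p = Min ((\<lambda>j. \<bar>\<beta> j\<bar>) ` supp \<beta> p)"

definition coherence :: "(nat \<Rightarrow> nat \<Rightarrow> real) \<Rightarrow> nat \<Rightarrow> nat \<Rightarrow> real" where
  "coherence X n p = Max {\<bar>\<Sum>i<n. X i j * X i k\<bar> / real n | j k. j < p \<and> k < p \<and> j \<noteq> k}"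

definition lam0 :: "(nat \<Rightarrow> nat \<Rightarrow> real) \<Rightarrow> nat \<Rightarrow> nat \<Rightarrow> (nat \<Rightarrow> real) \<Rightarrow> real" where
  "lam0 X n p y = Max {\<bar>\<Sum>i<n. X i j * y i\<bar> / real n | j. j < p}"

definition lambda_u :: "real \<Rightarrow> nat \<Rightarrow> nat \<Rightarrow> real" where
  "lambda_u \<sigma> n p = \<sigma> * sqrt (2 * ln (real p) / real n)"

definition delta_u :: "real \<Rightarrow> nat \<Rightarrow> nat \<Rightarrow> real" where
  "delta_u \<sigma> n p = 3 * lambda_u \<sigma> n p"

definition gam :: real where "gam = 8 / 13"

end

theory Submission
  imports Defs
begin


lemma (in prob_space) weighted_normal:
  fixes \<eta> :: "nat \<Rightarrow> 'a \<Rightarrow> real" and w :: "nat \<Rightarrow> real"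
  assumes ind: "indep_vars (\<lambda>_. borel) \<eta> {..<n}"
    and g: "\<forall>i<n. distributed M lborel (\<eta> i) (normal_density 0 \<sigma>)"
    and s: "\<sigma> > 0" and nz: "\<exists>i<n. w i \<noteq> 0"
  shows "distributed M lborel (\<lambda>\<omega>. \<Sum>i<n. w i * \<eta> i \<omega>)
           (normal_density 0 (\<sigma> * sqrt (\<Sum>i<n. (w i)\<^sup>2)))"
proof -
  define I where "I = {i. i < n \<and> w i \<noteq> 0}"
  have fin: "finite I" unfolding I_def by auto
  have ne: "I \<noteq> {}" using nz unfolding I_def by auto
  have sub: "I \<subseteq> {..<n}" unfolding I_def by auto
  have ind2: "indep_vars (\<lambda>_. borel) (\<lambda>i x. w i * \<eta> i x) I"
    using indep_vars_compose2[OF indep_vars_subset[OF ind sub], of "\<lambda>i x. w i * x" "\<lambda>_. borel"]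
    by simp
  have d: "distributed M lborel (\<lambda>x. w i * \<eta> i x) (normal_density 0 (\<bar>w i\<bar> * \<sigma>))" if "i \<in> I" for i
    using normal_density_affine[of "\<eta> i" 0 \<sigma> "w i" 0] g s that unfolding I_def by auto
  have "distributed M lborel (\<lambda>x. \<Sum>i\<in>I. w i * \<eta> i x)
      (normal_density (\<Sum>i\<in>I. 0) (sqrt (\<Sum>i\<in>I. (\<bar>w i\<bar> * \<sigma>)\<^sup>2)))"
    by (rule sum_indep_normal[OF fin ne ind2]) (use s d I_def in auto)
  moreover have "(\<lambda>x. \<Sum>i\<in>I. w i * \<eta> i x) = (\<lambda>\<omega>. \<Sum>i<n. w i * \<eta> i \<omega>)"
    by (rule ext, rule sum.mono_neutral_left) (auto simp: I_def)
  moreover have "(\<Sum>i\<in>I. (\<bar>w i\<bar> * \<sigma>)\<^sup>2) = \<sigma>\<^sup>2 * (\<Sum>i<n. (w i)\<^sup>2)"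
  proof -
    have "(\<Sum>i\<in>I. (\<bar>w i\<bar> * \<sigma>)\<^sup>2) = (\<Sum>i<n. (\<bar>w i\<bar> * \<sigma>)\<^sup>2)"
      by (rule sum.mono_neutral_left) (auto simp: I_def)
    also have "\<dots> = \<sigma>\<^sup>2 * (\<Sum>i<n. (w i)\<^sup>2)"
      by (simp add: sum_distrib_left power_mult_distrib mult.commute)
    finally show ?thesis .
  qed
  moreover have "sqrt (\<sigma>\<^sup>2 * (\<Sum>i<n. (w i)\<^sup>2)) = \<sigma> * sqrt (\<Sum>i<n. (w i)\<^sup>2)"
    using s by (simp add: real_sqrt_mult)
  ultimately show ?thesis by simp
qed

lemma (in prob_space) AE_ne_point:
  assumes "distributed M lborel W f"
  shows "AE \<omega> in M. W \<omega> \<noteq> d"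
proof -
  have "AE x in density lborel f. x \<noteq> d"
    using AE_lborel_singleton[of d] distributed_borel_measurable[OF assms]
    by (subst AE_density) (auto elim: AE_mp)
  then have "AE x in distr M lborel W. x \<noteq> d"
    unfolding distributed_distr_eq_density[OF assms] .
  then show ?thesis using AE_distrD[OF distributed_measurable[OF assms]] by blast
qed



lemma Q_lemma:
  fixes x L bmin lu :: real
  assumes L: "L = 30 * lu" and lu: "lu > 0" and xg: "x * gam > L"
    and ne: "\<forall>k::nat. x * gam ^ k \<noteq> L" and bm: "bmin \<ge> 78 * lu"
  shows "\<exists>N::nat. 1 \<le> N \<and> real N < log gam (L / x) \<and> x * gam ^ N > L \<and> L \<ge> x * gam ^ (N + 1)
           \<and> bmin > 8 / 5 * (x * gam ^ N)"
proof -
  have g0: "0 < gam" "gam < 1" by (auto simp: gam_def)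
  have Lp: "L > 0" using L lu by simp
  have xp: "x > 0" using xg Lp g0 by (smt (verit) mult_nonpos_nonneg)
  obtain m0 where "gam ^ m0 < L / x" using real_arch_pow_inv[of "L/x" gam] g0 Lp xp by auto
  then have ex: "x * gam ^ m0 \<le> L" using xp by (simp add: field_simps)
  define m where "m = (LEAST m. x * gam ^ m \<le> L)"
  have m1: "x * gam ^ m \<le> L" unfolding m_def by (rule LeastI[of _ m0]) (rule ex)
  have m2: "\<And>k. k < m \<Longrightarrow> x * gam ^ k > L" unfolding m_def using not_less_Least by force
  have "m \<noteq> 0" using m1 xg g0 xp by (smt (verit) mult_strict_left_mono power_0)
  moreover have "m \<noteq> 1" using m1 xg by auto
  ultimately have "m = (m - 1) + 1" "1 \<le> m - 1" by auto
  then obtain N where mN: "m = N + 1" and N1: "1 \<le> N" by blast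
  have a: "x * gam ^ N > L" using m2[of N] mN by simp
  have b: "x * gam ^ (N+1) < L" using m1 ne mN by (metis order_le_imp_less_or_eq)
  have c: "x * gam ^ N * gam < L" using b by (simp add: ac_simps)
  have d: "x * gam ^ N < L / gam" using c g0 by (simp add: field_simps)
  have e: "bmin > 8 / 5 * (x * gam ^ N)"
  proof -
    have "8 / 5 * (x * gam ^ N) < 8/5 * (L / gam)" using d by simp
    also have "8/5 * (L / gam) = 78 * lu" using L by (simp add: gam_def)
    finally show ?thesis using bm by simp
  qed
  have f: "real N < log gam (L / x)"
  proof -
    have lt: "L / x < gam ^ N" using a xp by (simp add: field_simps)
    have "ln (L / x) < ln (gam ^ N)" using lt Lp xp g0 by (intro ln_less_cancel_iff[THEN iffD2]) auto
    also have "ln (gam ^ N) = real N * ln gam" using g0 by (simp add: ln_realpow)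
    finally have "ln (L / x) < real N * ln gam" .
    moreover have "ln gam < 0" using g0 by simp
    ultimately have "ln (L / x) / ln gam > real N"
      using neg_less_divide_eq by blast
    then show ?thesis by (simp add: log_def)
  qed
  show ?thesis using N1 a b e f by auto
qed



lemma coh_ge:
  assumes "j < p" "k < p" "j \<noteq> k"
  shows "\<bar>\<Sum>i<n. X i j * X i k\<bar> / real n \<le> coherence X n p"
proof -
  let ?S = "{\<bar>\<Sum>i<n. X i j * X i k\<bar> / real n | j k. j < p \<and> k < p \<and> j \<noteq> k}"
  have "?S \<subseteq> (\<lambda>(j,k). \<bar>\<Sum>i<n. X i j * X i k\<bar> / real n) ` ({..<p} \<times> {..<p})" by auto
  then have "finite ?S" by (rule finite_subset) auto
  then show ?thesis unfolding coherence_def using assms by (intro Max_ge) auto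
qed

lemma signal_bound:
  fixes X :: "nat \<Rightarrow> nat \<Rightarrow> real" and \<beta> :: "nat \<Rightarrow> real"
  assumes n_pos: "n \<ge> 1" and p_ge: "p \<ge> 2"
    and cols: "\<forall>j<p. (\<Sum>i<n. (X i j)\<^sup>2) = real n"
    and j0: "j0 \<in> supp \<beta> p" and mx: "\<forall>k\<in>supp \<beta> p. \<bar>\<beta> k\<bar> \<le> \<bar>\<beta> j0\<bar>"
    and A1: "real (card (supp \<beta> p)) * coherence X n p \<le> 1 / 4"
  shows "\<bar>(\<Sum>i<n. X i j0 * (\<Sum>k<p. X i k * \<beta> k)) / real n\<bar> \<ge> 3/4 * \<bar>\<beta> j0\<bar>"
proof -
  define \<nu> where "\<nu> = coherence X n p"
  define G where "G k = (\<Sum>i<n. X i j0 * X i k)" for k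
  define S where "S = supp \<beta> p"
  have j0p: "j0 < p" using j0 unfolding supp_def by auto
  have fS: "finite S" unfolding S_def supp_def by auto
  have Gb: "\<bar>G k\<bar> \<le> real n * \<nu>" if "k < p" "k \<noteq> j0" for k
    using coh_ge[of j0 p k X n] that j0p n_pos unfolding G_def \<nu>_def by (simp add: field_simps)
  have nu0: "\<nu> \<ge> 0"
  proof -
    define k where "k = (if j0 = 0 then 1 else (0::nat))"
    have "k < p" "k \<noteq> j0" using p_ge unfolding k_def by auto
    from Gb[OF this] have "0 \<le> real n * \<nu>" by linarith
    then show ?thesis using n_pos by (simp add: zero_le_mult_iff)
  qed
  have eq1: "(\<Sum>i<n. X i j0 * (\<Sum>k<p. X i k * \<beta> k)) = (\<Sum>k<p. G k * \<beta> k)"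
    unfolding G_def by (simp add: sum_distrib_left sum_distrib_right sum.swap[of _ "{..<n}"] ac_simps)
  have Gj0: "G j0 = real n" using cols j0p unfolding G_def by (simp add: power2_eq_square)
  have split: "(\<Sum>k<p. G k * \<beta> k) = G j0 * \<beta> j0 + (\<Sum>k\<in>{..<p}-{j0}. G k * \<beta> k)"
    using j0p by (subst sum.remove[of _ j0]) auto
  have rest: "(\<Sum>k\<in>{..<p}-{j0}. G k * \<beta> k) = (\<Sum>k\<in>S-{j0}. G k * \<beta> k)"
    by (rule sum.mono_neutral_right) (auto simp: S_def supp_def)
  have "\<bar>\<Sum>k\<in>S-{j0}. G k * \<beta> k\<bar> \<le> (\<Sum>k\<in>S-{j0}. real n * \<nu> * \<bar>\<beta> j0\<bar>)"
  proof -
    have "\<bar>\<Sum>k\<in>S-{j0}. G k * \<beta> k\<bar> \<le> (\<Sum>k\<in>S-{j0}. \<bar>G k * \<beta> k\<bar>)" by (rule sum_abs)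
    also have "\<dots> \<le> (\<Sum>k\<in>S-{j0}. real n * \<nu> * \<bar>\<beta> j0\<bar>)"
    proof (rule sum_mono)
      fix k assume k: "k \<in> S - {j0}"
      then have "k < p" "k \<noteq> j0" unfolding S_def supp_def by auto
      then have "\<bar>G k\<bar> \<le> real n * \<nu>" by (rule Gb)
      moreover have "\<bar>\<beta> k\<bar> \<le> \<bar>\<beta> j0\<bar>" using mx k S_def by auto
      ultimately show "\<bar>G k * \<beta> k\<bar> \<le> real n * \<nu> * \<bar>\<beta> j0\<bar>"
        by (simp add: abs_mult mult_mono)
    qed
    finally show ?thesis .
  qed
  also have "\<dots> = real (card (S - {j0})) * (real n * \<nu> * \<bar>\<beta> j0\<bar>)" by simp
  also have "\<dots> \<le> real (card S) * (real n * \<nu> * \<bar>\<beta> j0\<bar>)"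
    using fS nu0 by (intro mult_right_mono) (auto intro: card_mono)
  also have "\<dots> = real n * \<bar>\<beta> j0\<bar> * (real (card S) * \<nu>)" by simp
  also have "\<dots> \<le> real n * \<bar>\<beta> j0\<bar> * (1/4)"
    using A1 unfolding S_def \<nu>_def by (intro mult_left_mono) auto
  finally have R: "\<bar>\<Sum>k\<in>S-{j0}. G k * \<beta> k\<bar> \<le> real n * \<bar>\<beta> j0\<bar> / 4" by simp
  have "\<bar>\<Sum>k<p. G k * \<beta> k\<bar> \<ge> real n * \<bar>\<beta> j0\<bar> * (3/4)"
  proof -
    have "\<bar>G j0 * \<beta> j0\<bar> = real n * \<bar>\<beta> j0\<bar>" using Gj0 by (simp add: abs_mult)
    then show ?thesis using split rest R by linarith
  qed
  then show ?thesis using eq1 n_pos by (simp add: field_simps)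
qed



theorem mainTheorem9:
  fixes M :: "'a measure"
    and X :: "nat \<Rightarrow> nat \<Rightarrow> real" and \<beta> :: "nat \<Rightarrow> real"
    and \<eta> :: "nat \<Rightarrow> 'a \<Rightarrow> real"
    and n p :: nat and \<sigma> :: real
  assumes "prob_space M"
    and n_pos: "n \<ge> 1" and p_ge: "p \<ge> 2"
    and cols: "\<forall>j<p. (\<Sum>i<n. (X i j)\<^sup>2) = real n"
    and supp_ne: "supp \<beta> p \<noteq> {}"
    and A1: "real (card (supp \<beta> p)) * coherence X n p \<le> 1 / 4"
    and A2: "beta_min \<beta> p \<ge> 78 * lambda_u \<sigma> n p"
    and sigma_pos: "\<sigma> > 0"
    and A3_indep: "prob_space.indep_vars M (\<lambda>_. borel) \<eta> {..<n}"
    and A3_gauss: "\<forall>i<n. distributed M lborel (\<eta> i) (normal_density 0 \<sigma>)"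
  shows "measure M {\<omega> \<in> space M.
           let y = (\<lambda>i. (\<Sum>j<p. X i j * \<beta> j) + \<eta> i \<omega>);
               l0 = lam0 X n p y;
               lam = (\<lambda>t::nat. l0 * gam ^ t)
           in \<exists>N::nat. 1 \<le> N \<and> real N < log gam (10 * delta_u \<sigma> n p / l0)
                 \<and> lam N > 10 * delta_u \<sigma> n p \<and> 10 * delta_u \<sigma> n p \<ge> lam (N + 1)
                 \<and> beta_min \<beta> p > 8 / 5 * lam N}
         \<ge> 1 - 1 / (2 * sqrt (pi * ln (real p)))"
proof -
  interpret prob_space M by fact
  define lu where "lu = lambda_u \<sigma> n p"
  define L where "L = 10 * delta_u \<sigma> n p"
  have lnp: "ln (real p) \<ge> 1/2"
  proof -
    have "ln (1/2::real) \<le> 1/2 - 1" by (rule ln_le_minus_one) auto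
    then have "ln (2::real) \<ge> 1/2" by (simp add: ln_div)
    moreover have "ln (2::real) \<le> ln (real p)" using p_ge by simp
    ultimately show ?thesis by linarith
  qed
  have lu_pos: "lu > 0" unfolding lu_def lambda_u_def using sigma_pos n_pos lnp by simp
  have L_eq: "L = 30 * lu" unfolding L_def lu_def delta_u_def by simp
  define c where "c i = (\<Sum>j<p. X i j * \<beta> j)" for i
  define yv where "yv \<omega> = (\<lambda>i. c i + \<eta> i \<omega>)" for \<omega>
  define l0 where "l0 \<omega> = lam0 X n p (yv \<omega>)" for \<omega>
  define Q where "Q x = (\<exists>N::nat. 1 \<le> N \<and> real N < log gam (L / x) \<and> x * gam ^ N > L \<and> L \<ge> x * gam ^ (N + 1)
           \<and> beta_min \<beta> p > 8 / 5 * (x * gam ^ N))" for x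
  define a where "a j = (\<Sum>i<n. X i j * c i) / real n" for j
  define Wj where "Wj j \<omega> = (\<Sum>i<n. (X i j / real n) * \<eta> i \<omega>)" for j \<omega>
  have Eeq: "{\<omega> \<in> space M.
           let y = (\<lambda>i. (\<Sum>j<p. X i j * \<beta> j) + \<eta> i \<omega>);
               l0 = lam0 X n p y;
               lam = (\<lambda>t::nat. l0 * gam ^ t)
           in \<exists>N::nat. 1 \<le> N \<and> real N < log gam (10 * delta_u \<sigma> n p / l0)
                 \<and> lam N > 10 * delta_u \<sigma> n p \<and> 10 * delta_u \<sigma> n p \<ge> lam (N + 1)
                 \<and> beta_min \<beta> p > 8 / 5 * lam N} = {\<omega> \<in> space M. Q (l0 \<omega>)}"
    unfolding Q_def l0_def yv_def c_def L_def Let_def by simp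
  have l0_eq: "l0 \<omega> = Max ((\<lambda>j. \<bar>a j + Wj j \<omega>\<bar>) ` {..<p})" for \<omega>
  proof -
    have "\<bar>\<Sum>i<n. X i j * yv \<omega> i\<bar> / real n = \<bar>a j + Wj j \<omega>\<bar>" for j
    proof -
      have "(\<Sum>i<n. X i j * yv \<omega> i) / real n = a j + Wj j \<omega>"
        unfolding yv_def a_def Wj_def
        by (simp add: distrib_left sum.distrib add_divide_distrib sum_divide_distrib)
      then show ?thesis using n_pos by (metis abs_divide abs_of_nat)
    qed
    moreover have "{\<bar>\<Sum>i<n. X i j * yv \<omega> i\<bar> / real n | j. j < p}
        = (\<lambda>j. \<bar>\<Sum>i<n. X i j * yv \<omega> i\<bar> / real n) ` {..<p}" by auto
    ultimately show ?thesis unfolding l0_def lam0_def by simp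
  qed
  have meas_eta[measurable]: "\<eta> i \<in> borel_measurable M" if "i < n" for i
    using distributed_measurable[OF A3_gauss[rule_format, OF that]] by simp
  have meas_W: "Wj j \<in> borel_measurable M" for j
    unfolding Wj_def by (intro borel_measurable_sum borel_measurable_times borel_measurable_const meas_eta) auto
  have meas_l0[measurable]: "l0 \<in> borel_measurable M"
    unfolding l0_eq by (intro borel_measurable_Max) (auto intro!: borel_measurable_abs borel_measurable_add meas_W)
  have E_meas: "{\<omega> \<in> space M. Q (l0 \<omega>)} \<in> sets M"
    unfolding Q_def by measurable
  have nzc: "\<exists>i<n. X i j / real n \<noteq> 0" if "j < p" for j
  proof (rule ccontr)
    assume "\<not> ?thesis"
    then have "\<forall>i<n. X i j = 0" using n_pos by auto
    then have "(\<Sum>i<n. (X i j)\<^sup>2) = 0" by simp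
    then show False using cols that n_pos by auto
  qed
  have sdW: "\<sigma> * sqrt (\<Sum>i<n. (X i j / real n)\<^sup>2) = \<sigma> / sqrt (real n)" if "j < p" for j
  proof -
    have "(\<Sum>i<n. (X i j / real n)\<^sup>2) = (\<Sum>i<n. (X i j)\<^sup>2) / (real n)\<^sup>2"
      by (simp add: power_divide sum_divide_distrib)
    also have "\<dots> = 1 / real n" using cols that n_pos by (simp add: power2_eq_square)
    finally show ?thesis by (simp add: real_sqrt_divide)
  qed
  have distW: "distributed M lborel (Wj j) (normal_density 0 (\<sigma> / sqrt (real n)))" if "j < p" for j
    using weighted_normal[OF A3_indep A3_gauss sigma_pos nzc[OF that]] sdW[OF that]
    unfolding Wj_def by simp
  define sd where "sd = \<sigma> / sqrt (real n)"
  have sd_pos: "sd > 0" unfolding sd_def using sigma_pos n_pos by simp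
  have AE1: "AE \<omega> in M. \<forall>k::nat. \<forall>j\<in>{..<p}. Wj j \<omega> \<noteq> L / gam ^ k - a j \<and> Wj j \<omega> \<noteq> - (L / gam ^ k) - a j"
    unfolding AE_all_countable
  proof
    fix k :: nat
    show "AE \<omega> in M. \<forall>j\<in>{..<p}. Wj j \<omega> \<noteq> L / gam ^ k - a j \<and> Wj j \<omega> \<noteq> - (L / gam ^ k) - a j"
      by (subst AE_ball_countable) (auto intro!: AE_conjI AE_ne_point distW)
  qed
  have fS: "finite (supp \<beta> p)" unfolding supp_def by auto
  obtain j0 where j0: "j0 \<in> supp \<beta> p" and j0m: "\<bar>\<beta> j0\<bar> = Max ((\<lambda>j. \<bar>\<beta> j\<bar>) ` supp \<beta> p)"
  proof -
    have "Max ((\<lambda>j. \<bar>\<beta> j\<bar>) ` supp \<beta> p) \<in> (\<lambda>j. \<bar>\<beta> j\<bar>) ` supp \<beta> p"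
      using fS supp_ne by (intro Max_in) auto
    then obtain j where "j \<in> supp \<beta> p" "Max ((\<lambda>j. \<bar>\<beta> j\<bar>) ` supp \<beta> p) = \<bar>\<beta> j\<bar>" by blast
    then show ?thesis using that by metis
  qed
  have mx: "\<forall>k\<in>supp \<beta> p. \<bar>\<beta> k\<bar> \<le> \<bar>\<beta> j0\<bar>" using j0m fS by auto
  have j0p: "j0 < p" using j0 unfolding supp_def by auto
  have bmin_le: "beta_min \<beta> p \<le> \<bar>\<beta> j0\<bar>" unfolding beta_min_def using fS j0 by auto
  have sig: "\<bar>a j0\<bar> \<ge> 3/4 * \<bar>\<beta> j0\<bar>"
    using signal_bound[OF n_pos p_ge cols j0 mx A1] unfolding a_def c_def .
  define W where "W = Wj j0"
  define t where "t = 9 * lu"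
  define S where "S = {\<omega> \<in> space M. \<bar>W \<omega>\<bar> \<le> t}"
  have AE2: "AE \<omega> in M. \<omega> \<in> S \<longrightarrow> \<omega> \<in> {\<omega> \<in> space M. Q (l0 \<omega>)}"
    using AE1
  proof (rule AE_mp, intro AE_I2 impI)
    fix \<omega> assume \<omega>: "\<omega> \<in> space M" and
      ne: "\<forall>k::nat. \<forall>j\<in>{..<p}. Wj j \<omega> \<noteq> L / gam ^ k - a j \<and> Wj j \<omega> \<noteq> - (L / gam ^ k) - a j"
      and S: "\<omega> \<in> S"
    have fin: "finite ((\<lambda>j. \<bar>a j + Wj j \<omega>\<bar>) ` {..<p})" by simp
    have "l0 \<omega> \<ge> \<bar>a j0 + Wj j0 \<omega>\<bar>" unfolding l0_eq using fin j0p by (intro Max_ge) auto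
    moreover have "\<bar>Wj j0 \<omega>\<bar> \<le> 9 * lu" using S unfolding S_def W_def t_def by auto
    ultimately have "l0 \<omega> \<ge> 3/4 * (78 * lu) - 9 * lu" using sig bmin_le A2 unfolding lu_def by linarith
    then have xg: "l0 \<omega> * gam > L" using L_eq lu_pos by (simp add: gam_def)
    have nek: "\<forall>k::nat. l0 \<omega> * gam ^ k \<noteq> L"
    proof
      fix k :: nat
      show "l0 \<omega> * gam ^ k \<noteq> L"
      proof
        assume eq: "l0 \<omega> * gam ^ k = L"
        have gk: "gam ^ k > 0" by (simp add: gam_def)
        have "l0 \<omega> = L / gam ^ k" using eq gk by (metis less_irrefl nonzero_mult_div_cancel_right)
        moreover have "l0 \<omega> \<in> (\<lambda>j. \<bar>a j + Wj j \<omega>\<bar>) ` {..<p}"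
          unfolding l0_eq using fin p_ge by (intro Max_in) (auto simp: image_is_empty lessThan_empty_iff)
        ultimately obtain j where "j < p" "\<bar>a j + Wj j \<omega>\<bar> = L / gam ^ k" by auto
        then have "Wj j \<omega> = L / gam ^ k - a j \<or> Wj j \<omega> = - (L / gam ^ k) - a j" by (auto simp: abs_if split: if_splits)
        then show False using ne \<open>j < p\<close> by blast
      qed
    qed
    have "Q (l0 \<omega>)" unfolding Q_def using Q_lemma[OF L_eq lu_pos xg nek] A2 unfolding lu_def by blast
    then show "\<omega> \<in> {\<omega> \<in> space M. Q (l0 \<omega>)}" using \<omega> by simp
  qed
  have mono: "measure M S \<le> measure M {\<omega> \<in> space M. Q (l0 \<omega>)}"
    by (rule finite_measure_mono_AE[OF AE2 E_meas])
  have dW: "distributed M lborel W (normal_density 0 sd)" using distW[OF j0p] unfolding W_def sd_def .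
  have rvW[measurable]: "W \<in> borel_measurable M" unfolding W_def by (rule meas_W)
  have intW: "integrable M (\<lambda>x. W x ^ 2)"
  proof -
    have "integrable lborel (\<lambda>x. normal_density 0 sd x * (x - 0) ^ 2)"
      using sd_pos by (rule integrable_normal_moment)
    then have "integrable lborel (\<lambda>x. normal_density 0 sd x * x ^ 2)" by simp
    then show ?thesis using distributed_integrable[OF dW, of "\<lambda>x. x ^ 2"] by simp
  qed
  have expW: "expectation W = 0" by (rule normal_distributed_expectation[OF sd_pos dW])
  have varW: "variance W = sd\<^sup>2" by (rule normal_distributed_variance[OF sd_pos dW])
  have t_pos: "t > 0" unfolding t_def using lu_pos by simp
  have cheb: "prob {x\<in>space M. \<bar>W x - expectation W\<bar> \<ge> t} \<le> variance W / t\<^sup>2"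
    by (rule Chebyshev_inequality[OF _ intW t_pos]) simp
  have Sc: "space M - S = {x\<in>space M. \<bar>W x\<bar> > t}" unfolding S_def by auto
  have S_meas: "S \<in> sets M" unfolding S_def by measurable
  have "prob (space M - S) \<le> prob {x\<in>space M. \<bar>W x - expectation W\<bar> \<ge> t}"
    unfolding Sc expW by (rule finite_measure_mono) (auto, measurable)
  also have "\<dots> \<le> sd\<^sup>2 / t\<^sup>2" using cheb varW by simp
  also have "sd\<^sup>2 / t\<^sup>2 = 1 / (162 * ln (real p))"
    unfolding sd_def t_def lu_def lambda_u_def using sigma_pos n_pos lnp
    by (simp add: power_divide power_mult_distrib field_simps)
  also have "\<dots> \<le> 1 / (2 * sqrt (pi * ln (real p)))"
  proof -
    define x where "x = ln (real p)"
    have x: "x \<ge> 1/2" using lnp x_def by simp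
    have h1: "pi * x \<le> 4 * x" using x pi_less_4 by (intro mult_right_mono) auto
    have h2: "6561 * x * (1/2) \<le> 6561 * x * x" using x by (intro mult_left_mono) auto
    have "pi * x \<le> (81 * x)\<^sup>2" using h1 h2 x by (simp add: power2_eq_square)
    then have "sqrt (pi * x) \<le> 81 * x" using x by (simp add: real_sqrt_le_iff real_le_lsqrt)
    then have "2 * sqrt (pi * x) \<le> 162 * x" by simp
    moreover have "0 < 2 * sqrt (pi * x)" using x by simp
    ultimately show ?thesis unfolding x_def[symmetric] by (simp add: frac_le)
  qed
  finally have "prob (space M - S) \<le> 1 / (2 * sqrt (pi * ln (real p)))" .
  moreover have "prob (space M - S) = 1 - prob S" using finite_measure_compl[OF S_meas] by (simp add: prob_space)
  ultimately have "prob S \<ge> 1 - 1 / (2 * sqrt (pi * ln (real p)))" by linarith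
  then show ?thesis unfolding Eeq using mono by linarith
qed

end
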